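(* Fix $\alpha\in\mathbb R$, $r\in\mathbb N_0$, and assume (WR$_{\alpha,r}$). Then there is $C_{\alpha,r}>0$ such that for every $f\in\mathcal C^{r+4}_{\alpha,\infty}(\mathbb R^k)$, $$\|Lf\|_{\alpha,r+2}+\|L^2f\|_{\alpha,r}\le C_{\alpha,r}\|f\|_{\alpha,r+4}.$$ In particular $L:\mathcal C^{r+2}_{\alpha,\infty}(\mathbb R^k)\to\mathcal C^r_{\alpha,\infty}(\mathbb R^k)$ is a bounded operator.
   Context: $\mathbb R^k$ Euclidean; $D^jf(x)$ the $j$-th derivative as a symmetric $j$-linear map, $\|\cdot\|$ operator norm. $b=\sigma_0,\dots,\sigma_d:\mathbb R^k\to\mathbb R^k$; $Lf(x)=Df(x)[b(x)]+\frac12\sum_{l=1}^dD^2f(x)[\sigma_l(x),\sigma_l(x)]$. $w_\gamma(x)=(1+|x|^2)^{\gamma/2}$; $\|f\|_{\alpha,k}=\max_{0\le j\le k}\sup_x\|D^jf(x)\|/w_{\alpha-j}(x)$; $\mathcal C^k_{\alpha,\infty}(\mathbb R^k)$ is the space of $f\in C^k$ with $\|f\|_{\alpha,k}<\infty$ and each $\|D^jf\|/w_{\alpha-j}$ ($0\le j\le k$) vanishing at infinity. (WR$_{\alpha,r}$): each $\sigma_j\in C^{r+4}$ with $\|D^q\sigma_j(x)\|\le K_{\alpha,r}w_{1-q}(x)$ for all $x$, $q=0,\dots,r+4$, $j=0..d$, and $D^{r+4}\sigma_j$ globally Hölder of some exponent $\theta\in(0,1)$. *)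

theory Defs
  imports "HOL-Analysis.Analysis"
begin

text \<open>Iterated (Frechet) derivative applied to a list of fixed directions:
  nder f [h1,...,hj] x = D^j f(x)[h1,...,hj].\<close>
fun nder :: "('a::real_normed_vector \<Rightarrow> 'b::real_normed_vector) \<Rightarrow> 'a list \<Rightarrow> 'a \<Rightarrow> 'b" where
  "nder f [] = f"
| "nder f (h # hs) = (\<lambda>x. frechet_derivative (nder f hs) (at x) h)"

fun Ck :: "nat \<Rightarrow> ('a::euclidean_space \<Rightarrow> 'b::real_normed_vector) \<Rightarrow> bool" where
  "Ck 0 f = continuous_on UNIV f"
| "Ck (Suc k) f = ((\<forall>x. f differentiable (at x))
      \<and> continuous_on UNIV (\<lambda>x. Blinfun (frechet_derivative f (at x)))
      \<and> (\<forall>h. Ck k (\<lambda>x. frechet_derivative f (at x) h)))"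

definition mlnorm :: "nat \<Rightarrow> ('a::real_normed_vector list \<Rightarrow> 'b::real_normed_vector) \<Rightarrow> real" where
  "mlnorm j F = (SUP hs \<in> {hs. length hs = j \<and> (\<forall>h\<in>set hs. norm h \<le> 1)}. norm (F hs))"

definition dnorm :: "nat \<Rightarrow> ('a::real_normed_vector \<Rightarrow> 'b::real_normed_vector) \<Rightarrow> 'a \<Rightarrow> real" where
  "dnorm j f x = mlnorm j (\<lambda>hs. nder f hs x)"

definition wt :: "real \<Rightarrow> 'a::real_normed_vector \<Rightarrow> real" where
  "wt \<gamma> x = (1 + (norm x)\<^sup>2) powr (\<gamma> / 2)"

definition wnorm :: "real \<Rightarrow> nat \<Rightarrow> ('a::euclidean_space \<Rightarrow> real) \<Rightarrow> real" where
  "wnorm \<alpha> k f = Max ((\<lambda>j. SUP x. dnorm j f x / wt (\<alpha> - real j) x) ` {0..k})"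

definition Cspace :: "real \<Rightarrow> nat \<Rightarrow> ('a::euclidean_space \<Rightarrow> real) set" where
  "Cspace \<alpha> k = {f. Ck k f
      \<and> (\<forall>j\<le>k. bdd_above (range (\<lambda>x. dnorm j f x / wt (\<alpha> - real j) x)))
      \<and> (\<forall>j\<le>k. ((\<lambda>x. dnorm j f x / wt (\<alpha> - real j) x) \<longlongrightarrow> 0) at_infinity)}"

text \<open>The generator: sigma 0 = b, sigma 1..d the diffusion fields.
  Lf(x) = Df(x)[b(x)] + 1/2 sum_{l=1}^d D^2 f(x)[sigma_l(x), sigma_l(x)].\<close>
definition Lop :: "(nat \<Rightarrow> 'a::euclidean_space \<Rightarrow> 'a) \<Rightarrow> nat \<Rightarrow> ('a \<Rightarrow> real) \<Rightarrow> 'a \<Rightarrow> real" where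
  "Lop \<sigma> d f x = nder f [\<sigma> 0 x] x + 1/2 * (\<Sum>l=1..d. nder f [\<sigma> l x, \<sigma> l x] x)"

definition WR :: "real \<Rightarrow> nat \<Rightarrow> (nat \<Rightarrow> 'a::euclidean_space \<Rightarrow> 'a) \<Rightarrow> nat \<Rightarrow> bool" where
  "WR K r \<sigma> d = (\<forall>j\<le>d.
      Ck (r + 4) (\<sigma> j)
    \<and> (\<forall>q\<le>r + 4. \<forall>x. dnorm q (\<sigma> j) x \<le> K * wt (1 - real q) x)
    \<and> (\<exists>\<theta> H. 0 < \<theta> \<and> \<theta> < 1 \<and> (\<forall>x y.
          mlnorm (r + 4) (\<lambda>hs. nder (\<sigma> j) hs x - nder (\<sigma> j) hs y) \<le> H * dist x y powr \<theta>)))"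

end

theory Submission
  imports Defs
begin

lemma fd_works: "f differentiable (at x) \<Longrightarrow> (f has_derivative frechet_derivative f (at x)) (at x)"
  using frechet_derivative_works by blast

lemma fd_eq: "(f has_derivative f') (at x) \<Longrightarrow> frechet_derivative f (at x) = f'"
  using frechet_derivative_at by metis

lemma fd_bl: "f differentiable (at x) \<Longrightarrow> bounded_linear (frechet_derivative f (at x))"
  using fd_works has_derivative_bounded_linear by blast

lemma Ck_cont: "Ck n f \<Longrightarrow> continuous_on UNIV f"
proof (cases n)
  case 0 then show "Ck n f \<Longrightarrow> ?thesis" by simp
next
  case (Suc m) then show "Ck n f \<Longrightarrow> ?thesis"
    by (auto intro!: continuous_at_imp_continuous_on differentiable_imp_continuous_within)
qed

lemma Ck_Suc_mono: "Ck (Suc n) f \<Longrightarrow> Ck n f"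
proof (induction n arbitrary: f)
  case 0 then show ?case using Ck_cont[OF 0] by simp
next
  case (Suc n)
  have "\<forall>h. Ck n (\<lambda>x. frechet_derivative f (at x) h)"
    using Suc.prems by (intro allI Suc.IH) (simp del: Ck.simps(2) add: Ck.simps(2)[of "Suc n"])
  then show ?case using Suc.prems by (simp del: Ck.simps(2) add: Ck.simps(2)[of "Suc n"] Ck.simps(2)[of "n"])
qed

lemma Ck_mono: "Ck m f \<Longrightarrow> n \<le> m \<Longrightarrow> Ck n f"
proof (induction m)
  case 0 then show ?case by simp
next
  case (Suc m) then show ?case using Ck_Suc_mono le_Suc_eq by blast
qed

lemma Ck_const: "Ck n (\<lambda>x. c)"
proof (induction n arbitrary: c)
  case 0 then show ?case by simp
next
  case (Suc n) then show ?case by simp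
qed

lemma Ck_add: "Ck n f \<Longrightarrow> Ck n g \<Longrightarrow> Ck n (\<lambda>x. f x + g x)"
proof (induction n arbitrary: f g)
  case 0 then show ?case by (simp add: continuous_on_add)
next
  case (Suc n)
  have df: "\<And>x. f differentiable (at x)" and dg: "\<And>x. g differentiable (at x)" using Suc.prems by auto
  have eq: "frechet_derivative (\<lambda>x. f x + g x) (at x) = (\<lambda>h. frechet_derivative f (at x) h + frechet_derivative g (at x) h)" for x
    by (intro fd_eq has_derivative_add fd_works df dg)
  have beq: "Blinfun (\<lambda>h. frechet_derivative f (at x) h + frechet_derivative g (at x) h) = Blinfun (frechet_derivative f (at x)) + Blinfun (frechet_derivative g (at x))" for x
  proof (rule blinfun_eqI)
    fix i
    have bl: "bounded_linear (\<lambda>h. frechet_derivative f (at x) h + frechet_derivative g (at x) h)"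
      by (intro bounded_linear_add fd_bl df dg)
    show "blinfun_apply (Blinfun (\<lambda>h. frechet_derivative f (at x) h + frechet_derivative g (at x) h)) i = blinfun_apply (Blinfun (frechet_derivative f (at x)) + Blinfun (frechet_derivative g (at x))) i"
      by (simp add: bounded_linear_Blinfun_apply[OF bl] bounded_linear_Blinfun_apply[OF fd_bl] df dg blinfun.add_left)
  qed
  have c: "continuous_on UNIV (\<lambda>x. Blinfun (frechet_derivative f (at x)))" "continuous_on UNIV (\<lambda>x. Blinfun (frechet_derivative g (at x)))"
    using Suc.prems by simp_all
  have "continuous_on UNIV (\<lambda>x. Blinfun (frechet_derivative (\<lambda>x. f x + g x) (at x)))"
    unfolding eq beq by (intro continuous_on_add c)
  moreover have "Ck n (\<lambda>x. frechet_derivative (\<lambda>x. f x + g x) (at x) h)" for h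
    unfolding eq using Suc.prems by (intro Suc.IH) simp_all
  ultimately show ?case using df dg by (simp add: differentiable_add)
qed

lemma Ck_linear: "bounded_linear T \<Longrightarrow> Ck n f \<Longrightarrow> Ck n (\<lambda>x. T (f x))"
proof (induction n arbitrary: f)
  case 0
  have "continuous_on UNIV T" by (rule linear_continuous_on[OF 0(1)])
  moreover have "continuous_on UNIV f" using 0 by simp
  ultimately show ?case using continuous_on_compose2[of UNIV T UNIV f] by simp
next
  case (Suc n)
  have df: "\<And>x. f differentiable (at x)" using Suc.prems by auto
  have eq: "frechet_derivative (\<lambda>x. T (f x)) (at x) = (\<lambda>h. T (frechet_derivative f (at x) h))" for x
    by (intro fd_eq bounded_linear.has_derivative[OF Suc.prems(1)] fd_works df)
  have beq: "Blinfun (\<lambda>h. T (frechet_derivative f (at x) h)) = Blinfun T o\<^sub>L Blinfun (frechet_derivative f (at x))" for x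
  proof (rule blinfun_eqI)
    fix i
    have bl: "bounded_linear (\<lambda>h. T (frechet_derivative f (at x) h))"
      using bounded_linear_compose[OF Suc.prems(1) fd_bl[OF df]] by (simp add: o_def)
    show "blinfun_apply (Blinfun (\<lambda>h. T (frechet_derivative f (at x) h))) i = blinfun_apply (Blinfun T o\<^sub>L Blinfun (frechet_derivative f (at x))) i"
      by (simp add: bounded_linear_Blinfun_apply[OF bl] bounded_linear_Blinfun_apply[OF fd_bl] df Suc.prems(1) bounded_linear_Blinfun_apply[OF Suc.prems(1)])
  qed
  have c: "continuous_on UNIV (\<lambda>x. Blinfun (frechet_derivative f (at x)))" using Suc.prems by simp
  have "continuous_on UNIV (\<lambda>x. Blinfun (frechet_derivative (\<lambda>x. T (f x)) (at x)))"
    unfolding eq beq by (intro bounded_bilinear.continuous_on[OF bounded_bilinear_blinfun_compose] c continuous_on_const)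
  moreover have "Ck n (\<lambda>x. frechet_derivative (\<lambda>x. T (f x)) (at x) h)" for h
    unfolding eq using Suc.prems by (intro Suc.IH) simp_all
  moreover have "(\<lambda>x. T (f x)) differentiable (at x)" for x
    using bounded_linear.has_derivative[OF Suc.prems(1) fd_works[OF df]] by (auto simp: differentiable_def)
  ultimately show ?case by simp
qed

lemma Ck_mult: "Ck n (g::'a::euclidean_space \<Rightarrow> real) \<Longrightarrow> Ck n u \<Longrightarrow> Ck n (\<lambda>x. g x * u x)"
proof (induction n arbitrary: g u)
  case 0 then show ?case by (simp add: continuous_on_mult)
next
  case (Suc n)
  have df: "\<And>x. g differentiable (at x)" and dg: "\<And>x. u differentiable (at x)" using Suc.prems by auto
  have eq: "frechet_derivative (\<lambda>x. g x * u x) (at x) = (\<lambda>h. g x * frechet_derivative u (at x) h + frechet_derivative g (at x) h * u x)" for x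
    by (intro fd_eq has_derivative_mult fd_works df dg)
  have beq: "Blinfun (\<lambda>h. g x * frechet_derivative u (at x) h + frechet_derivative g (at x) h * u x) = g x *\<^sub>R Blinfun (frechet_derivative u (at x)) + u x *\<^sub>R Blinfun (frechet_derivative g (at x))" for x
  proof (rule blinfun_eqI)
    fix i
    have bl: "bounded_linear (\<lambda>h. g x * frechet_derivative u (at x) h + frechet_derivative g (at x) h * u x)"
      by (intro bounded_linear_add bounded_linear_mult_right[THEN bounded_linear_compose, OF fd_bl] bounded_linear_mult_left[THEN bounded_linear_compose, OF fd_bl] df dg)
    show "blinfun_apply (Blinfun (\<lambda>h. g x * frechet_derivative u (at x) h + frechet_derivative g (at x) h * u x)) i = blinfun_apply (g x *\<^sub>R Blinfun (frechet_derivative u (at x)) + u x *\<^sub>R Blinfun (frechet_derivative g (at x))) i"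
      by (simp add: bounded_linear_Blinfun_apply[OF bl] bounded_linear_Blinfun_apply[OF fd_bl] df dg blinfun.add_left blinfun.scaleR_left)
  qed
  have cg: "continuous_on UNIV g" "continuous_on UNIV u" using Suc.prems Ck_cont by blast+
  have ih: "Ck n (\<lambda>x. g x * frechet_derivative u (at x) h + frechet_derivative g (at x) h * u x)" for h
    using Suc.prems by (intro Ck_add Suc.IH) (auto intro: Ck_Suc_mono)
  have c: "continuous_on UNIV (\<lambda>x. Blinfun (frechet_derivative g (at x)))" "continuous_on UNIV (\<lambda>x. Blinfun (frechet_derivative u (at x)))"
    using Suc.prems by simp_all
  have "continuous_on UNIV (\<lambda>x. Blinfun (frechet_derivative (\<lambda>x. g x * u x) (at x)))"
    unfolding eq beq by (intro continuous_on_add continuous_on_scaleR c cg)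
  moreover have "Ck n (\<lambda>x. frechet_derivative (\<lambda>x. g x * u x) (at x) h)" for h
    unfolding eq by (rule ih)
  ultimately show ?case using df dg by (simp add: differentiable_mult)
qed

lemma nder_append: "nder (nder f ks) hs = nder f (hs @ ks)"
  by (induction hs) auto

lemma Ck_nder: "Ck n f \<Longrightarrow> length hs \<le> n \<Longrightarrow> Ck (n - length hs) (nder f hs)"
proof (induction hs)
  case Nil then show ?case by simp
next
  case (Cons h hs)
  have e: "n - length hs = Suc (n - length (h # hs))" using Cons.prems(2) by simp
  have "Ck (n - length hs) (nder f hs)" using Cons by simp
  then have "Ck (Suc (n - length (h # hs))) (nder f hs)" by (simp only: e)
  then have "\<forall>k. Ck (n - length (h # hs)) (\<lambda>x. frechet_derivative (nder f hs) (at x) k)"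
    by (simp only: Ck.simps(2)) blast
  then show ?case by simp
qed

lemma nder_diff: "Ck n f \<Longrightarrow> length hs < n \<Longrightarrow> nder f hs differentiable (at x)"
proof -
  assume a: "Ck n f" "length hs < n"
  have e: "n - length hs = Suc (n - Suc (length hs))" using a(2) by simp
  have "Ck (n - length hs) (nder f hs)" using Ck_nder[OF a(1) less_imp_le[OF a(2)]] .
  then have "Ck (Suc (n - Suc (length hs))) (nder f hs)" by (simp only: e)
  then show ?thesis by (simp only: Ck.simps(2))
qed

lemma Ck_sum: "finite I \<Longrightarrow> (\<And>i. i \<in> I \<Longrightarrow> Ck n (F i)) \<Longrightarrow> Ck n (\<lambda>x. \<Sum>i\<in>I. F i x)"
  by (induction I rule: finite_induct) (auto intro!: Ck_add Ck_const)

lemma nder_add: "Ck n f \<Longrightarrow> Ck n g \<Longrightarrow> length hs \<le> n \<Longrightarrow>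
   nder (\<lambda>x. f x + g x) hs = (\<lambda>x. nder f hs x + nder g hs x)"
proof (induction hs)
  case Nil then show ?case by simp
next
  case (Cons h hs)
  have d: "nder f hs differentiable (at x)" "nder g hs differentiable (at x)" for x
    using Cons.prems by (auto intro: nder_diff)
  have "frechet_derivative (\<lambda>x. nder f hs x + nder g hs x) (at x) = (\<lambda>h. frechet_derivative (nder f hs) (at x) h + frechet_derivative (nder g hs) (at x) h)" for x
    by (intro fd_eq has_derivative_add fd_works d)
  then show ?case using Cons by simp
qed

lemma nder_linear: "bounded_linear T \<Longrightarrow> Ck n f \<Longrightarrow> length hs \<le> n \<Longrightarrow>
   nder (\<lambda>x. T (f x)) hs = (\<lambda>x. T (nder f hs x))"
proof (induction hs)
  case Nil then show ?case by simp
next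
  case (Cons h hs)
  have d: "nder f hs differentiable (at x)" for x
    using Cons.prems by (auto intro: nder_diff)
  have "frechet_derivative (\<lambda>x. T (nder f hs x)) (at x) = (\<lambda>h. T (frechet_derivative (nder f hs) (at x) h))" for x
    by (intro fd_eq bounded_linear.has_derivative[OF Cons.prems(1)] fd_works d)
  then show ?case using Cons by simp
qed

lemma nder_zero: "nder (\<lambda>x. 0) hs = (\<lambda>x. 0)"
  by (induction hs) auto

lemma nder_sum: "finite I \<Longrightarrow> (\<And>i. i \<in> I \<Longrightarrow> Ck n (F i)) \<Longrightarrow> length hs \<le> n \<Longrightarrow>
   nder (\<lambda>x. \<Sum>i\<in>I. F i x) hs = (\<lambda>x. \<Sum>i\<in>I. nder (F i) hs x)"
proof (induction I rule: finite_induct)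
  case empty then show ?case by (simp add: nder_zero)
next
  case (insert i I)
  have "nder (\<lambda>x. \<Sum>i\<in>insert i I. F i x) hs = nder (\<lambda>x. F i x + (\<Sum>i\<in>I. F i x)) hs"
    using insert by simp
  also have "\<dots> = (\<lambda>x. nder (F i) hs x + nder (\<lambda>x. \<Sum>i\<in>I. F i x) hs x)"
    using insert by (intro nder_add Ck_sum) auto
  also have "nder (\<lambda>x. \<Sum>i\<in>I. F i x) hs = (\<lambda>x. \<Sum>i\<in>I. nder (F i) hs x)"
    by (rule insert.IH) (use insert.prems in auto)
  finally show ?case using insert.hyps by simp
qed

lemma nder_first: "nder f hs differentiable (at x) \<Longrightarrow>
   nder f (v # hs) x = (\<Sum>b\<in>Basis. (v \<bullet> b) *\<^sub>R nder f (b # hs) x)"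
proof -
  assume d: "nder f hs differentiable (at x)"
  have l: "linear (frechet_derivative (nder f hs) (at x))"
    using fd_bl[OF d] bounded_linear.linear by blast
  have "nder f (v # hs) x = frechet_derivative (nder f hs) (at x) (\<Sum>b\<in>Basis. (v \<bullet> b) *\<^sub>R b)"
    by (simp add: euclidean_representation)
  also have "\<dots> = (\<Sum>b\<in>Basis. (v \<bullet> b) *\<^sub>R frechet_derivative (nder f hs) (at x) b)"
    by (simp add: linear_sum[OF l] linear_scale[OF l])
  finally show ?thesis by simp
qed

fun splits :: "'a list \<Rightarrow> ('a list \<times> 'a list) list" where
  "splits [] = [([], [])]"
| "splits (h # hs) = map (\<lambda>(a, b). (h # a, b)) (splits hs) @ map (\<lambda>(a, b). (a, h # b)) (splits hs)"

lemma splits_len: "length (splits hs) = 2 ^ length hs"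
  by (induction hs) auto

lemma splits_set: "(a, b) \<in> set (splits hs) \<Longrightarrow> set a \<subseteq> set hs \<and> set b \<subseteq> set hs \<and> length a + length b = length hs"
proof (induction hs arbitrary: a b)
  case Nil then show ?case by simp
next
  case (Cons h hs)
  from Cons.prems obtain a' b' where ab: "(a', b') \<in> set (splits hs)" "(a = h # a' \<and> b = b') \<or> (a = a' \<and> b = h # b')"
    by auto
  from Cons.IH[OF ab(1)] ab(2) show ?case by auto
qed

lemma has_derivative_sum_list:
  "(\<And>p. p \<in> set ps \<Longrightarrow> ((F p) has_derivative (F' p)) (at x)) \<Longrightarrow>
   ((\<lambda>x. sum_list (map (\<lambda>p. F p x) ps)) has_derivative (\<lambda>h. sum_list (map (\<lambda>p. F' p h) ps))) (at x)"
  by (induction ps) (auto intro!: has_derivative_add)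

lemma nder_mult: "Ck n (g::'a::euclidean_space \<Rightarrow> real) \<Longrightarrow> Ck n u \<Longrightarrow> length hs \<le> n \<Longrightarrow>
   nder (\<lambda>x. g x * u x) hs = (\<lambda>x. sum_list (map (\<lambda>(a, b). nder g a x * nder u b x) (splits hs)))"
proof (induction hs)
  case Nil then show ?case by simp
next
  case (Cons h hs)
  have d: "nder g a differentiable (at x)" "nder u b differentiable (at x)" if "(a, b) \<in> set (splits hs)" for a b x
    using Cons.prems splits_set[OF that] by (auto intro!: nder_diff)
  have "((\<lambda>x. sum_list (map (\<lambda>p. (\<lambda>(a, b). nder g a x * nder u b x) p) (splits hs))) has_derivative
     (\<lambda>h. sum_list (map (\<lambda>p. (\<lambda>(a, b). nder g a x * frechet_derivative (nder u b) (at x) h + frechet_derivative (nder g a) (at x) h * nder u b x) p) (splits hs)))) (at x)" for x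
    by (rule has_derivative_sum_list) (auto intro!: has_derivative_mult fd_works d)
  from fd_eq[OF this] have e: "frechet_derivative (\<lambda>x. sum_list (map (\<lambda>(a, b). nder g a x * nder u b x) (splits hs))) (at x) h =
     sum_list (map (\<lambda>(a, b). nder g a x * nder u (h # b) x + nder g (h # a) x * nder u b x) (splits hs))" for x
    by (simp add: case_prod_beta' sum_list_addf)
  have ih: "nder (\<lambda>x. g x * u x) hs = (\<lambda>x. sum_list (map (\<lambda>(a, b). nder g a x * nder u b x) (splits hs)))"
    by (rule Cons.IH) (use Cons.prems in auto)
  show ?case
    apply (subst nder.simps(2))
    apply (subst ih)
    apply (simp only: e)
    apply (rule ext)
    apply (simp only: splits.simps sum_list_append map_append map_map)
    apply (simp add: o_def case_prod_unfold sum_list_addf add.commute)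
    done
qed

lemma wt_pos: "0 < wt p x"
proof -
  have "1 + (norm x)\<^sup>2 \<noteq> 0" by (smt (verit) zero_le_power2)
  then show ?thesis unfolding wt_def by simp
qed

lemma wt_mult: "wt a x * wt b x = wt (a + b) x"
  unfolding wt_def by (simp add: powr_add[symmetric] add_divide_distrib)

lemma sum_list_const: "sum_list (map (\<lambda>p. c) xs) = real (length xs) * (c::real)"
  by (induction xs) (auto simp: algebra_simps)

lemma abs_sum_list_le: "\<bar>sum_list (map F xs)\<bar> \<le> sum_list (map (\<lambda>p. \<bar>F p\<bar>) xs)" for F :: "_ \<Rightarrow> real"
  by (induction xs) (auto intro: order_trans[OF abs_triangle_ineq])

definition GB :: "nat \<Rightarrow> ('a::euclidean_space \<Rightarrow> 'b::real_normed_vector) \<Rightarrow> real \<Rightarrow> ('a \<Rightarrow> real) \<Rightarrow> bool" where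
  "GB n f p E \<longleftrightarrow> Ck n f \<and> (\<forall>hs x. length hs \<le> n \<longrightarrow> (\<forall>h\<in>set hs. norm h \<le> 1) \<longrightarrow>
      norm (nder f hs x) \<le> E x * wt (p - real (length hs)) x)"

lemma GBD: "GB n f p E \<Longrightarrow> length hs \<le> n \<Longrightarrow> (\<And>h. h \<in> set hs \<Longrightarrow> norm h \<le> 1) \<Longrightarrow>
      norm (nder f hs x) \<le> E x * wt (p - real (length hs)) x"
  unfolding GB_def by blast

lemma GBC: "GB n f p E \<Longrightarrow> Ck n f"
  unfolding GB_def by blast

lemma GBI: "Ck n f \<Longrightarrow> (\<And>hs x. length hs \<le> n \<Longrightarrow> (\<And>h. h \<in> set hs \<Longrightarrow> norm h \<le> 1) \<Longrightarrow>
      norm (nder f hs x) \<le> E x * wt (p - real (length hs)) x) \<Longrightarrow> GB n f p E"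
  unfolding GB_def by blast

lemma GB_E: assumes "GB n f p E" "\<And>x. E x \<le> E' x" shows "GB n f p E'"
proof (rule GBI)
  show "Ck n f" using GBC[OF assms(1)] .
  fix hs :: "'a list" and x :: 'a assume "length hs \<le> n" "\<And>h. h \<in> set hs \<Longrightarrow> norm h \<le> 1"
  from GBD[OF assms(1) this] have "norm (nder f hs x) \<le> E x * wt (p - real (length hs)) x" .
  also have "\<dots> \<le> E' x * wt (p - real (length hs)) x"
    using assms(2) wt_pos[of _ x] by (intro mult_right_mono) (auto intro: less_imp_le)
  finally show "norm (nder f hs x) \<le> E' x * wt (p - real (length hs)) x" .
qed

lemma GB_n: assumes "GB n f p E" "m \<le> n" shows "GB m f p E"
proof (rule GBI)
  show "Ck m f" using Ck_mono GBC[OF assms(1)] assms(2) by blast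
  fix hs :: "'a list" and x :: 'a assume "length hs \<le> m" "\<And>h. h \<in> set hs \<Longrightarrow> norm h \<le> 1"
  then show "norm (nder f hs x) \<le> E x * wt (p - real (length hs)) x"
    using GBD[OF assms(1)] assms(2) by simp
qed

lemma GB_add: assumes "GB n f p A" "GB n g p B" shows "GB n (\<lambda>x. f x + g x) p (\<lambda>x. A x + B x)"
proof (rule GBI)
  show "Ck n (\<lambda>x. f x + g x)" using GBC assms by (intro Ck_add) auto
  fix hs :: "'a list" and x :: 'a assume a: "length hs \<le> n" "\<And>h. h \<in> set hs \<Longrightarrow> norm h \<le> 1"
  have "nder (\<lambda>x. f x + g x) hs x = nder f hs x + nder g hs x"
    using nder_add[OF GBC[OF assms(1)] GBC[OF assms(2)] a(1)] by simp
  also have "norm \<dots> \<le> norm (nder f hs x) + norm (nder g hs x)" by (rule norm_triangle_ineq)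
  also have "\<dots> \<le> A x * wt (p - real (length hs)) x + B x * wt (p - real (length hs)) x"
    using GBD[OF assms(1) a] GBD[OF assms(2) a] by (intro add_mono)
  finally show "norm (nder (\<lambda>x. f x + g x) hs x) \<le> (A x + B x) * wt (p - real (length hs)) x"
    by (simp add: algebra_simps)
qed

lemma GB_zero: "GB n (\<lambda>x. 0) p (\<lambda>x. 0)"
  by (rule GBI) (simp_all add: Ck_const nder_zero)

lemma GB_sum: "finite I \<Longrightarrow> (\<And>i. i \<in> I \<Longrightarrow> GB n (F i) p (A i)) \<Longrightarrow>
   GB n (\<lambda>x. \<Sum>i\<in>I. F i x) p (\<lambda>x. \<Sum>i\<in>I. A i x)"
proof (induction I rule: finite_induct)
  case empty then show ?case by (simp add: GB_zero)
next
  case (insert i I)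
  have "GB n (\<lambda>x. F i x + (\<Sum>i\<in>I. F i x)) p (\<lambda>x. A i x + (\<Sum>i\<in>I. A i x))"
    by (rule GB_add) (use insert in auto)
  then show ?case using insert.hyps by simp
qed

lemma GB_linear: fixes f :: "'a::euclidean_space \<Rightarrow> 'b::real_normed_vector" and T :: "'b \<Rightarrow> 'c::real_normed_vector"
  assumes T: "bounded_linear T" and Tb: "\<And>v. norm (T v) \<le> c * norm v" and c: "0 \<le> c"
  and G: "GB n f p A"
  shows "GB n (\<lambda>x. T (f x)) p (\<lambda>x. c * A x)"
proof (rule GBI)
  show "Ck n (\<lambda>x. T (f x))" by (rule Ck_linear[OF T GBC[OF G]])
  fix hs :: "'a list" and x :: 'a assume a: "length hs \<le> n" "\<And>h. h \<in> set hs \<Longrightarrow> norm h \<le> 1"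
  have "nder (\<lambda>x. T (f x)) hs x = T (nder f hs x)"
    using nder_linear[OF T GBC[OF G] a(1)] by simp
  also have "norm \<dots> \<le> c * norm (nder f hs x)" by (rule Tb)
  also have "\<dots> \<le> c * (A x * wt (p - real (length hs)) x)"
    using GBD[OF G a] c by (intro mult_left_mono)
  finally show "norm (nder (\<lambda>x. T (f x)) hs x) \<le> c * A x * wt (p - real (length hs)) x"
    by (simp add: algebra_simps)
qed

lemma GB_scale: "GB n f p A \<Longrightarrow> GB n (\<lambda>x. c * f x) p (\<lambda>x. \<bar>c\<bar> * A x)"
  for f :: "'a::euclidean_space \<Rightarrow> real"
  by (rule GB_linear) (auto simp: bounded_linear_mult_right abs_mult)

lemma GB_inner: assumes a: "GB n f p A" "norm b \<le> 1" shows "GB n (\<lambda>x. f x \<bullet> b) p A"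
proof -
  have "GB n (\<lambda>x. f x \<bullet> b) p (\<lambda>x. 1 * A x)"
  proof (rule GB_linear[OF bounded_linear_inner_left _ _ a(1)])
    fix v
    have "norm (v \<bullet> b) \<le> norm v * norm b" by (simp add: Cauchy_Schwarz_ineq2)
    also have "\<dots> \<le> 1 * norm v" using a(2) by (simp add: mult_left_le)
    finally show "norm (v \<bullet> b) \<le> 1 * norm v" .
  qed simp
  then show ?thesis by simp
qed

lemma GB_mult: fixes g u :: "'a::euclidean_space \<Rightarrow> real"
  assumes G: "GB n g p A" and U: "GB n u q B" and A0: "\<And>x. 0 \<le> A x" and B0: "\<And>x. 0 \<le> B x"
  shows "GB n (\<lambda>x. g x * u x) (p + q) (\<lambda>x. 2 ^ n * (A x * B x))"
proof (rule GBI)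
  show "Ck n (\<lambda>x. g x * u x)" by (rule Ck_mult[OF GBC[OF G] GBC[OF U]])
  fix hs :: "'a list" and x :: 'a assume a: "length hs \<le> n" "\<And>h. h \<in> set hs \<Longrightarrow> norm h \<le> 1"
  let ?w = "wt (p + q - real (length hs)) x"
  have "norm (nder (\<lambda>x. g x * u x) hs x) = \<bar>sum_list (map (\<lambda>(a, b). nder g a x * nder u b x) (splits hs))\<bar>"
    using nder_mult[OF GBC[OF G] GBC[OF U] a(1)] by simp
  also have "\<dots> \<le> sum_list (map (\<lambda>ab. \<bar>(\<lambda>(a, b). nder g a x * nder u b x) ab\<bar>) (splits hs))"
    by (rule abs_sum_list_le)
  also have "\<dots> \<le> sum_list (map (\<lambda>ab. A x * B x * ?w) (splits hs))"
  proof (rule sum_list_mono)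
    fix ab assume ab: "ab \<in> set (splits hs)"
    obtain a b where abe: "ab = (a, b)" by fastforce
    have s: "set a \<subseteq> set hs" "set b \<subseteq> set hs" "length a + length b = length hs"
      using splits_set ab abe by blast+
    have ga: "\<bar>nder g a x\<bar> \<le> A x * wt (p - real (length a)) x"
      using GBD[OF G, of a x] a s by auto
    have ub: "\<bar>nder u b x\<bar> \<le> B x * wt (q - real (length b)) x"
      using GBD[OF U, of b x] a s by auto
    have "\<bar>nder g a x * nder u b x\<bar> \<le> (A x * wt (p - real (length a)) x) * (B x * wt (q - real (length b)) x)"
      unfolding abs_mult by (intro mult_mono ga ub) (auto simp: A0 intro!: mult_nonneg_nonneg less_imp_le[OF wt_pos])
    also have "\<dots> = A x * B x * (wt (p - real (length a)) x * wt (q - real (length b)) x)" by simp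
    also have "wt (p - real (length a)) x * wt (q - real (length b)) x = ?w"
      unfolding wt_mult using s(3) by (simp add: algebra_simps flip: of_nat_add)
    finally show "\<bar>(\<lambda>(a, b). nder g a x * nder u b x) ab\<bar> \<le> A x * B x * ?w" by (simp add: abe)
  qed
  also have "\<dots> = 2 ^ length hs * (A x * B x) * ?w"
    by (simp add: sum_list_const splits_len)
  also have "\<dots> \<le> 2 ^ n * (A x * B x) * ?w"
  proof -
    have "(2::real) ^ length hs \<le> 2 ^ n" using a(1) by (simp add: power_increasing)
    then show ?thesis using A0[of x] B0[of x] wt_pos[of _ x]
      by (intro mult_right_mono) (auto intro: less_imp_le)
  qed
  finally show "norm (nder (\<lambda>x. g x * u x) hs x) \<le> 2 ^ n * (A x * B x) * wt (p + q - real (length hs)) x" .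
qed

lemma GB_shift: assumes G: "GB (Suc n) f p E" and e: "norm e \<le> 1" shows "GB n (nder f [e]) (p - 1) E"
proof (rule GBI)
  show "Ck n (nder f [e])" using Ck_nder[OF GBC[OF G], of "[e]"] by simp
  fix hs :: "'a list" and x :: 'a assume a: "length hs \<le> n" "\<And>h. h \<in> set hs \<Longrightarrow> norm h \<le> 1"
  have "norm (nder (nder f [e]) hs x) = norm (nder f (hs @ [e]) x)" by (simp only: nder_append)
  also have "\<dots> \<le> E x * wt (p - real (length (hs @ [e]))) x" using a e by (intro GBD[OF G]) auto
  finally show "norm (nder (nder f [e]) hs x) \<le> E x * wt (p - 1 - real (length hs)) x"
    by (simp add: algebra_simps)
qed

lemma nder_bdd: "Ck n f \<Longrightarrow> j \<le> n \<Longrightarrow>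
  \<exists>B. \<forall>hs. length hs = j \<longrightarrow> (\<forall>h\<in>set hs. norm h \<le> 1) \<longrightarrow> norm (nder f hs x) \<le> B"
proof (induction j arbitrary: n f)
  case 0 then show ?case by (intro exI[of _ "norm (f x)"]) auto
next
  case (Suc j)
  obtain n' where n: "n = Suc n'" using Suc.prems(2) by (cases n) auto
  have df: "f differentiable (at y)" for y using Suc.prems(1) n by simp
  have Ckb: "Ck n' (nder f [b])" for b using Ck_nder[OF Suc.prems(1), of "[b]"] n by simp
  have "\<forall>b\<in>Basis. \<exists>B. \<forall>hs. length hs = j \<longrightarrow> (\<forall>h\<in>set hs. norm h \<le> 1) \<longrightarrow> norm (nder (nder f [b]) hs x) \<le> B"
    using Suc.IH[OF Ckb] Suc.prems(2) n by simp
  then obtain Bf where Bf: "\<And>b hs. b \<in> Basis \<Longrightarrow> length hs = j \<Longrightarrow> (\<forall>h\<in>set hs. norm h \<le> 1) \<Longrightarrow> norm (nder (nder f [b]) hs x) \<le> Bf b"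
    by metis
  show ?case
  proof (intro exI[of _ "\<Sum>b\<in>Basis. Bf b"] allI impI)
    fix hs :: "'a list" assume hs: "length hs = Suc j" "\<forall>h\<in>set hs. norm h \<le> 1"
    then obtain hs' h where hse: "hs = hs' @ [h]" by (metis length_Suc_conv_rev)
    have hs': "length hs' = j" "\<forall>h\<in>set hs'. norm h \<le> 1" "norm h \<le> 1" using hs hse by auto
    have e1: "nder f [h] = (\<lambda>y. \<Sum>b\<in>Basis. (h \<bullet> b) *\<^sub>R nder f [b] y)"
      using nder_first[of f "[]" _ h] df by (intro ext) simp
    have Cks: "Ck n' (\<lambda>y. (h \<bullet> b) *\<^sub>R nder f [b] y)" for b
      by (rule Ck_linear[OF bounded_linear_scaleR_right Ckb])
    have "nder f hs x = nder (nder f [h]) hs' x" by (simp only: hse nder_append)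
    also have "\<dots> = (\<Sum>b\<in>Basis. nder (\<lambda>y. (h \<bullet> b) *\<^sub>R nder f [b] y) hs' x)"
      unfolding e1 using nder_sum[of Basis n' "\<lambda>b y. (h \<bullet> b) *\<^sub>R nder f [b] y" hs'] Cks hs' Suc.prems(2) n by simp
    also have "\<dots> = (\<Sum>b\<in>Basis. (h \<bullet> b) *\<^sub>R nder (nder f [b]) hs' x)"
      using nder_linear[OF bounded_linear_scaleR_right Ckb] hs' Suc.prems(2) n by simp
    finally have eq: "nder f hs x = (\<Sum>b\<in>Basis. (h \<bullet> b) *\<^sub>R nder (nder f [b]) hs' x)" .
    have "norm (nder f hs x) \<le> (\<Sum>b\<in>Basis. norm ((h \<bullet> b) *\<^sub>R nder (nder f [b]) hs' x))"
      unfolding eq by (rule norm_sum)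
    also have "\<dots> \<le> (\<Sum>b\<in>Basis. Bf b)"
    proof (rule sum_mono)
      fix b :: 'a assume b: "b \<in> Basis"
      have "\<bar>h \<bullet> b\<bar> \<le> 1" using Basis_le_norm[OF b, of h] hs' by simp
      then have "\<bar>h \<bullet> b\<bar> * norm (nder (nder f [b]) hs' x) \<le> 1 * Bf b"
        using Bf[OF b hs'(1,2)] by (intro mult_mono) auto
      then show "norm ((h \<bullet> b) *\<^sub>R nder (nder f [b]) hs' x) \<le> Bf b" by simp
    qed
    finally show "norm (nder f hs x) \<le> (\<Sum>b\<in>Basis. Bf b)" .
  qed
qed

lemma nder_le_dnorm: "Ck n f \<Longrightarrow> length hs \<le> n \<Longrightarrow> (\<forall>h\<in>set hs. norm h \<le> 1) \<Longrightarrow>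
   norm (nder f hs x) \<le> dnorm (length hs) f x"
proof -
  assume a: "Ck n f" "length hs \<le> n" "\<forall>h\<in>set hs. norm h \<le> 1"
  obtain B where B: "\<And>ks. length ks = length hs \<Longrightarrow> (\<forall>h\<in>set ks. norm h \<le> 1) \<Longrightarrow> norm (nder f ks x) \<le> B"
    using nder_bdd[OF a(1,2), of x] by blast
  show ?thesis unfolding dnorm_def mlnorm_def
    by (rule cSUP_upper) (use a B in \<open>auto intro!: bdd_aboveI2\<close>)
qed

lemma dnorm_le: "(\<And>hs. length hs = j \<Longrightarrow> (\<forall>h\<in>set hs. norm h \<le> 1) \<Longrightarrow> norm (nder f hs x) \<le> M) \<Longrightarrow> dnorm j f x \<le> M"
  unfolding dnorm_def mlnorm_def
proof (rule cSUP_least)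
  show "{hs. length hs = j \<and> (\<forall>h\<in>set hs. norm h \<le> 1)} \<noteq> {}"
  proof -
    have "replicate j 0 \<in> {hs. length hs = j \<and> (\<forall>h\<in>set hs. norm h \<le> 1)}" by simp
    then show ?thesis by blast
  qed
qed auto

lemma dnorm_nonneg: "Ck n f \<Longrightarrow> j \<le> n \<Longrightarrow> 0 \<le> dnorm j f x"
  using nder_le_dnorm[of n f "replicate j 0" x] by (auto intro: order_trans[OF norm_ge_zero])

definition Ef :: "real \<Rightarrow> nat \<Rightarrow> ('a::euclidean_space \<Rightarrow> real) \<Rightarrow> 'a \<Rightarrow> real" where
  "Ef \<alpha> n f x = (\<Sum>i\<in>{0..n}. dnorm i f x / wt (\<alpha> - real i) x)"

lemma Cspace_Ck: "f \<in> Cspace \<alpha> n \<Longrightarrow> Ck n f"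
  unfolding Cspace_def by blast

lemma Ef_nonneg: "f \<in> Cspace \<alpha> n \<Longrightarrow> 0 \<le> Ef \<alpha> n f x"
  unfolding Ef_def
  by (intro sum_nonneg divide_nonneg_pos dnorm_nonneg[OF Cspace_Ck] wt_pos) auto

lemma Cspace_GB: assumes f: "f \<in> Cspace \<alpha> n" shows "GB n f \<alpha> (Ef \<alpha> n f)"
proof (rule GBI)
  show "Ck n f" using Cspace_Ck[OF f] .
  fix hs :: "'a list" and x :: 'a assume a: "length hs \<le> n" "\<And>h. h \<in> set hs \<Longrightarrow> norm h \<le> 1"
  let ?w = "wt (\<alpha> - real (length hs)) x"
  have "norm (nder f hs x) \<le> dnorm (length hs) f x"
    using nder_le_dnorm[OF Cspace_Ck[OF f] a(1)] a(2) by blast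
  also have "\<dots> = (dnorm (length hs) f x / ?w) * ?w" using wt_pos[of _ x] by (simp add: less_imp_neq[symmetric])
  also have "dnorm (length hs) f x / ?w \<le> Ef \<alpha> n f x"
    unfolding Ef_def
    by (rule member_le_sum[where i="length hs" and f="\<lambda>i. dnorm i f x / wt (\<alpha> - real i) x", simplified])
       (use a(1) in \<open>auto intro!: divide_nonneg_pos dnorm_nonneg[OF Cspace_Ck[OF f]] wt_pos\<close>)
  then have "(dnorm (length hs) f x / ?w) * ?w \<le> Ef \<alpha> n f x * ?w"
    using wt_pos[of _ x] by (intro mult_right_mono) (auto intro: less_imp_le)
  finally show "norm (nder f hs x) \<le> Ef \<alpha> n f x * ?w" .
qed

lemma Ef_bound: assumes f: "f \<in> Cspace \<alpha> n" shows "Ef \<alpha> n f x \<le> real (n + 1) * wnorm \<alpha> n f"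
proof -
  have "Ef \<alpha> n f x \<le> real (card {0..n}) * wnorm \<alpha> n f"
    unfolding Ef_def
  proof (rule sum_bounded_above)
    fix i assume i: "i \<in> {0..n}"
    have "dnorm i f x / wt (\<alpha> - real i) x \<le> (SUP x. dnorm i f x / wt (\<alpha> - real i) x)"
      by (rule cSUP_upper) (use f i in \<open>auto simp: Cspace_def\<close>)
    also have "\<dots> \<le> wnorm \<alpha> n f"
      unfolding wnorm_def by (rule Max_ge) (use i in auto)
    finally show "dnorm i f x / wt (\<alpha> - real i) x \<le> wnorm \<alpha> n f" .
  qed
  then show ?thesis by simp
qed

lemma Ef_lim: assumes f: "f \<in> Cspace \<alpha> n" shows "(Ef \<alpha> n f \<longlongrightarrow> 0) at_infinity"
proof -
  have "((\<lambda>x. \<Sum>i\<in>{0..n}. dnorm i f x / wt (\<alpha> - real i) x) \<longlongrightarrow> 0) at_infinity"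
    by (rule tendsto_null_sum) (use f in \<open>auto simp: Cspace_def\<close>)
  then show ?thesis unfolding Ef_def[abs_def] .
qed

lemma GB_Cspace:
  fixes g :: "'a::euclidean_space \<Rightarrow> real"
  assumes G: "GB n g \<alpha> (\<lambda>x. c * E x)" and c: "0 \<le> c" and E0: "\<And>x. 0 \<le> E x" and EM: "\<And>x. E x \<le> M"
    and El: "(E \<longlongrightarrow> 0) at_infinity"
  shows "g \<in> Cspace \<alpha> n \<and> wnorm \<alpha> n g \<le> c * M"
proof -
  have r: "0 \<le> dnorm j g x / wt (\<alpha> - real j) x \<and> dnorm j g x / wt (\<alpha> - real j) x \<le> c * E x" if j: "j \<le> n" for j x
  proof -
    have "dnorm j g x \<le> c * E x * wt (\<alpha> - real j) x"
      by (rule dnorm_le) (use GBD[OF G] j in auto)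
    moreover have "0 \<le> dnorm j g x" using dnorm_nonneg[OF GBC[OF G] j] .
    moreover have "0 < wt (\<alpha> - real j) x" by (rule wt_pos)
    ultimately show ?thesis by (simp add: pos_divide_le_eq divide_nonneg_pos)
  qed
  have cM: "c * E x \<le> c * M" for x using EM c by (simp add: mult_left_mono)
  have bdd: "bdd_above (range (\<lambda>x. dnorm j g x / wt (\<alpha> - real j) x))" if "j \<le> n" for j
    by (rule bdd_aboveI2[where M="c * M"]) (use r[OF that] cM in \<open>auto intro: order_trans\<close>)
  have lim: "((\<lambda>x. dnorm j g x / wt (\<alpha> - real j) x) \<longlongrightarrow> 0) at_infinity" if "j \<le> n" for j
  proof (rule tendsto_sandwich[of "\<lambda>_. 0" _ _ "\<lambda>x. c * E x"])
    show "\<forall>\<^sub>F x in at_infinity. 0 \<le> dnorm j g x / wt (\<alpha> - real j) x" using r[OF that] by simp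
    show "\<forall>\<^sub>F x in at_infinity. dnorm j g x / wt (\<alpha> - real j) x \<le> c * E x" using r[OF that] by simp
    show "((\<lambda>x. c * E x) \<longlongrightarrow> 0) at_infinity" using tendsto_mult[OF tendsto_const El, of c] by simp
  qed simp
  have "g \<in> Cspace \<alpha> n" unfolding Cspace_def using GBC[OF G] bdd lim by blast
  moreover have "wnorm \<alpha> n g \<le> c * M"
    unfolding wnorm_def
  proof (subst Max_le_iff, simp, simp, intro ballI)
    fix y assume "y \<in> (\<lambda>j. SUP x. dnorm j g x / wt (\<alpha> - real j) x) ` {0..n}"
    then obtain j where j: "j \<le> n" "y = (SUP x. dnorm j g x / wt (\<alpha> - real j) x)" by auto
    show "y \<le> c * M" unfolding j(2)
      by (rule cSUP_least) (use r[OF j(1)] cM in \<open>auto intro: order_trans\<close>)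
  qed
  ultimately show ?thesis by blast
qed

lemma Lop_eq:
  fixes f :: "'a::euclidean_space \<Rightarrow> real"
  assumes f: "Ck 2 f"
  shows "Lop \<sigma> d f = (\<lambda>x. (\<Sum>b\<in>Basis. (\<sigma> 0 x \<bullet> b) * nder f [b] x) +
     1/2 * (\<Sum>l=1..d. \<Sum>b\<in>Basis. \<Sum>c\<in>Basis. ((\<sigma> l x \<bullet> b) * (\<sigma> l x \<bullet> c)) * nder f [b, c] x))"
proof (intro ext)
  fix x
  have df: "nder f [] differentiable (at y)" for y using nder_diff[OF f, of "[]"] by simp
  have d1: "nder f [v] differentiable (at y)" for v y using nder_diff[OF f, of "[v]"] by simp
  have Ck1: "Ck 1 (nder f [c])" for c using Ck_nder[OF f, of "[c]"] by simp
  have one: "nder f [v] y = (\<Sum>b\<in>Basis. (v \<bullet> b) * nder f [b] y)" for v y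
    using nder_first[OF df[of y], of v] by simp
  have two: "nder f [v, v] x = (\<Sum>b\<in>Basis. \<Sum>c\<in>Basis. ((v \<bullet> b) * (v \<bullet> c)) * nder f [b, c] x)" for v
  proof -
    have s1: "nder f [v, v] x = (\<Sum>b\<in>Basis. (v \<bullet> b) * nder f [b, v] x)"
      using nder_first[OF d1[of v x], of v] by simp
    have s2: "nder f [b, v] x = (\<Sum>c\<in>Basis. (v \<bullet> c) * nder f [b, c] x)" for b
    proof -
      have "nder f [b, v] x = nder (nder f [v]) [b] x" by (simp only: nder_append) simp
      also have "nder f [v] = (\<lambda>y. \<Sum>c\<in>Basis. (v \<bullet> c) * nder f [c] y)" by (intro ext one)
      also have "nder (\<lambda>y. \<Sum>c\<in>Basis. (v \<bullet> c) * nder f [c] y) [b] x = (\<Sum>c\<in>Basis. nder (\<lambda>y. (v \<bullet> c) * nder f [c] y) [b] x)"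
        using nder_sum[of Basis 1 "\<lambda>c y. (v \<bullet> c) * nder f [c] y" "[b]"] Ck_linear[OF bounded_linear_mult_right Ck1] by simp
      also have "\<dots> = (\<Sum>c\<in>Basis. (v \<bullet> c) * nder (nder f [c]) [b] x)"
        using nder_linear[OF bounded_linear_mult_right Ck1, of "[b]"] by simp
      also have "\<dots> = (\<Sum>c\<in>Basis. (v \<bullet> c) * nder f [b, c] x)"
        by (simp only: nder_append) simp
      finally show ?thesis .
    qed
    have "nder f [v, v] x = (\<Sum>b\<in>Basis. (v \<bullet> b) * (\<Sum>c\<in>Basis. (v \<bullet> c) * nder f [b, c] x))"
      unfolding s1 by (rule sum.cong[OF refl]) (simp only: s2)
    also have "\<dots> = (\<Sum>b\<in>Basis. \<Sum>c\<in>Basis. ((v \<bullet> b) * (v \<bullet> c)) * nder f [b, c] x)"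
      by (simp only: sum_distrib_left mult.assoc)
    finally show ?thesis .
  qed
  show "Lop \<sigma> d f x = (\<Sum>b\<in>Basis. (\<sigma> 0 x \<bullet> b) * nder f [b] x) +
     1/2 * (\<Sum>l=1..d. \<Sum>b\<in>Basis. \<Sum>c\<in>Basis. ((\<sigma> l x \<bullet> b) * (\<sigma> l x \<bullet> c)) * nder f [b, c] x)"
    unfolding Lop_def one[of "\<sigma> 0 x" x] two ..
qed

lemma WR_GB: fixes \<sigma> :: "nat \<Rightarrow> 'a::euclidean_space \<Rightarrow> 'a" assumes W: "WR K r \<sigma> d" and j: "j \<le> d" shows "GB (r + 4) (\<sigma> j) 1 (\<lambda>_. K)"
proof (rule GBI)
  have Wj: "Ck (r + 4) (\<sigma> j) \<and> (\<forall>q\<le>r + 4. \<forall>x. dnorm q (\<sigma> j) x \<le> K * wt (1 - real q) x)"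
    using conjunct1[OF W[unfolded WR_def, rule_format, OF j]] conjunct1[OF conjunct2[OF W[unfolded WR_def, rule_format, OF j]]]
    by (rule conjI)
  show Ck: "Ck (r + 4) (\<sigma> j)" using Wj by blast
  fix hs :: "'a list" and x :: 'a assume a: "length hs \<le> r + 4" "\<And>h. h \<in> set hs \<Longrightarrow> norm h \<le> 1"
  have a2: "\<forall>h\<in>set hs. norm h \<le> 1" using a(2) by blast
  have "norm (nder (\<sigma> j) hs x) \<le> dnorm (length hs) (\<sigma> j) x"
    using nder_le_dnorm[OF Ck a(1) a2] .
  also have "\<dots> \<le> K * wt (1 - real (length hs)) x" using conjunct2[OF Wj, rule_format, OF a(1)] .
  finally show "norm (nder (\<sigma> j) hs x) \<le> K * wt (1 - real (length hs)) x" .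
qed

lemma WR_K: fixes \<sigma> :: "nat \<Rightarrow> 'a::euclidean_space \<Rightarrow> 'a" assumes W: "WR K r \<sigma> d" shows "0 \<le> K"
proof -
  note W0 = W[unfolded WR_def, rule_format, OF le0]
  have Ck: "Ck (r + 4) (\<sigma> 0)" by (rule conjunct1[OF W0])
  have a: "0 \<le> dnorm 0 (\<sigma> 0) 0" by (rule dnorm_nonneg[OF Ck]) simp
  have b: "dnorm 0 (\<sigma> 0) 0 \<le> K * wt (1 - real 0) (0::'a)"
    by (rule conjunct1[OF conjunct2[OF W0], rule_format, OF le0])
  have "0 \<le> K * wt (1 - real 0) (0::'a)" using a b by (rule order_trans)
  moreover have "0 < wt (1 - real 0) (0::'a)" by (rule wt_pos)
  ultimately show ?thesis by (simp add: zero_le_mult_iff)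
qed

definition cL :: "nat \<Rightarrow> nat \<Rightarrow> real \<Rightarrow> nat \<Rightarrow> real" where
  "cL dm d K m = real dm * (2 ^ m * K) + 1/2 * (real d * (real dm * (real dm * (2 ^ m * (2 ^ m * (K * K))))))"

lemma cL_nonneg: "0 \<le> K \<Longrightarrow> 0 \<le> cL dm d K m"
  unfolding cL_def by simp

lemma L_main:
  fixes \<sigma> :: "nat \<Rightarrow> 'a::euclidean_space \<Rightarrow> 'a" and f :: "'a \<Rightarrow> real"
  assumes W: "WR K r \<sigma> d" and m: "m \<le> r + 2" and f: "f \<in> Cspace \<alpha> (m + 2)"
  shows "Lop \<sigma> d f \<in> Cspace \<alpha> m \<and> wnorm \<alpha> m (Lop \<sigma> d f) \<le> (cL DIM('a) d K m * real (m + 3)) * wnorm \<alpha> (m + 2) f"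
proof -
  let ?E = "Ef \<alpha> (m + 2) f"
  have K: "0 \<le> K" by (rule WR_K[OF W])
  have E0: "0 \<le> ?E x" for x by (rule Ef_nonneg[OF f])
  have Gf: "GB (Suc (Suc m)) f \<alpha> ?E" using Cspace_GB[OF f] by simp
  have Gs: "GB m (\<lambda>x. \<sigma> j x \<bullet> b) 1 (\<lambda>_. K)" if "j \<le> d" "b \<in> Basis" for j b
    using GB_inner[OF GB_n[OF WR_GB[OF W that(1)]]] m that(2) by simp
  have G1: "GB m (nder f [b]) (\<alpha> - 1) ?E" if "b \<in> Basis" for b
    using GB_n[OF GB_shift[OF Gf]] that by simp
  have G2: "GB m (nder f [b, c]) (\<alpha> - 1 - 1) ?E" if "b \<in> Basis" "c \<in> Basis" for b c
  proof -
    have "GB m (nder (nder f [c]) [b]) (\<alpha> - 1 - 1) ?E"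
      using GB_shift[OF GB_shift[OF Gf]] that by simp
    then show ?thesis by (simp only: nder_append) simp
  qed
  have T1b: "GB m (\<lambda>x. (\<sigma> 0 x \<bullet> b) * nder f [b] x) \<alpha> (\<lambda>x. 2 ^ m * (K * ?E x))" if b: "b \<in> Basis" for b
  proof -
    have "GB m (\<lambda>x. (\<sigma> 0 x \<bullet> b) * nder f [b] x) (1 + (\<alpha> - 1)) (\<lambda>x. 2 ^ m * (K * ?E x))"
      by (rule GB_mult[OF Gs G1]) (use b K E0 in auto)
    then show ?thesis by simp
  qed
  have T1: "GB m (\<lambda>x. \<Sum>b\<in>Basis. (\<sigma> 0 x \<bullet> b) * nder f [b] x) \<alpha> (\<lambda>x. \<Sum>b\<in>(Basis::'a set). 2 ^ m * (K * ?E x))"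
    using GB_sum[of "Basis :: 'a set" m "\<lambda>b x. (\<sigma> 0 x \<bullet> b) * nder f [b] x" \<alpha> "\<lambda>b x. 2 ^ m * (K * ?E x)"] T1b by simp
  have T2c: "GB m (\<lambda>x. ((\<sigma> l x \<bullet> b) * (\<sigma> l x \<bullet> c)) * nder f [b, c] x) \<alpha> (\<lambda>x. 2 ^ m * (2 ^ m * (K * K) * ?E x))"
    if l: "l \<in> {1..d}" and b: "b \<in> Basis" and c: "c \<in> Basis" for l b c
  proof -
    have "GB m (\<lambda>x. (\<sigma> l x \<bullet> b) * (\<sigma> l x \<bullet> c)) (1 + 1) (\<lambda>x. 2 ^ m * (K * K))"
      by (rule GB_mult[OF Gs Gs]) (use l b c K in auto)
    from GB_mult[OF this G2[OF b c]] K E0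
    have "GB m (\<lambda>x. ((\<sigma> l x \<bullet> b) * (\<sigma> l x \<bullet> c)) * nder f [b, c] x) ((1 + 1) + (\<alpha> - 1 - 1)) (\<lambda>x. 2 ^ m * (2 ^ m * (K * K) * ?E x))"
      by simp
    then show ?thesis by simp
  qed
  have T2b: "GB m (\<lambda>x. \<Sum>c\<in>Basis. ((\<sigma> l x \<bullet> b) * (\<sigma> l x \<bullet> c)) * nder f [b, c] x) \<alpha>
      (\<lambda>x. \<Sum>c\<in>(Basis::'a set). 2 ^ m * (2 ^ m * (K * K) * ?E x))"
    if l: "l \<in> {1..d}" and b: "b \<in> Basis" for l b
    using GB_sum[of "Basis :: 'a set" m "\<lambda>c x. ((\<sigma> l x \<bullet> b) * (\<sigma> l x \<bullet> c)) * nder f [b, c] x" \<alpha> "\<lambda>c x. 2 ^ m * (2 ^ m * (K * K) * ?E x)"]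
      T2c[OF l b] by simp
  have T2l: "GB m (\<lambda>x. \<Sum>b\<in>Basis. \<Sum>c\<in>Basis. ((\<sigma> l x \<bullet> b) * (\<sigma> l x \<bullet> c)) * nder f [b, c] x) \<alpha>
      (\<lambda>x. \<Sum>b\<in>(Basis::'a set). \<Sum>c\<in>(Basis::'a set). 2 ^ m * (2 ^ m * (K * K) * ?E x))"
    if l: "l \<in> {1..d}" for l
    using GB_sum[of "Basis :: 'a set" m "\<lambda>b x. \<Sum>c\<in>Basis. ((\<sigma> l x \<bullet> b) * (\<sigma> l x \<bullet> c)) * nder f [b, c] x" \<alpha> "\<lambda>b x. \<Sum>c\<in>(Basis::'a set). 2 ^ m * (2 ^ m * (K * K) * ?E x)"]
      T2b[OF l] by simp
  have T2: "GB m (\<lambda>x. \<Sum>l=1..d. \<Sum>b\<in>Basis. \<Sum>c\<in>Basis. ((\<sigma> l x \<bullet> b) * (\<sigma> l x \<bullet> c)) * nder f [b, c] x) \<alpha>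
     (\<lambda>x. \<Sum>l=1..d. \<Sum>b\<in>(Basis::'a set). \<Sum>c\<in>(Basis::'a set). 2 ^ m * (2 ^ m * (K * K) * ?E x))"
    using GB_sum[of "{1..d}" m "\<lambda>l x. \<Sum>b\<in>Basis. \<Sum>c\<in>Basis. ((\<sigma> l x \<bullet> b) * (\<sigma> l x \<bullet> c)) * nder f [b, c] x" \<alpha>
      "\<lambda>l x. \<Sum>b\<in>(Basis::'a set). \<Sum>c\<in>(Basis::'a set). 2 ^ m * (2 ^ m * (K * K) * ?E x)"] T2l by simp
  have GL: "GB m (Lop \<sigma> d f) \<alpha> (\<lambda>x. cL DIM('a) d K m * ?E x)"
  proof -
    have "Ck 2 f" using Ck_mono[OF Cspace_Ck[OF f], of 2] by simp
    then have eq: "Lop \<sigma> d f = (\<lambda>x. (\<Sum>b\<in>Basis. (\<sigma> 0 x \<bullet> b) * nder f [b] x) +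
     1/2 * (\<Sum>l=1..d. \<Sum>b\<in>Basis. \<Sum>c\<in>Basis. ((\<sigma> l x \<bullet> b) * (\<sigma> l x \<bullet> c)) * nder f [b, c] x))"
      by (rule Lop_eq)
    have "GB m (Lop \<sigma> d f) \<alpha> (\<lambda>x. (\<Sum>b\<in>(Basis::'a set). 2 ^ m * (K * ?E x)) + \<bar>1/2\<bar> * (\<Sum>l=1..d. \<Sum>b\<in>(Basis::'a set). \<Sum>c\<in>(Basis::'a set). 2 ^ m * (2 ^ m * (K * K) * ?E x)))"
      unfolding eq by (rule GB_add[OF T1 GB_scale[OF T2]])
    then show ?thesis
      by (rule GB_E) (simp add: cL_def algebra_simps)
  qed
  have "Lop \<sigma> d f \<in> Cspace \<alpha> m \<and> wnorm \<alpha> m (Lop \<sigma> d f) \<le> cL DIM('a) d K m * (real (m + 2 + 1) * wnorm \<alpha> (m + 2) f)"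
    by (rule GB_Cspace[OF GL cL_nonneg[OF K] E0 Ef_bound[OF f] Ef_lim[OF f]])
  then show ?thesis by (simp add: algebra_simps)
qed

lemma wnorm_nonneg: "f \<in> Cspace \<alpha> n \<Longrightarrow> 0 \<le> wnorm \<alpha> n f"
proof -
  assume f: "f \<in> Cspace \<alpha> n"
  have "0 \<le> Ef \<alpha> n f 0" by (rule Ef_nonneg[OF f])
  also have "\<dots> \<le> real (n + 1) * wnorm \<alpha> n f" by (rule Ef_bound[OF f])
  finally show ?thesis by (simp add: zero_le_mult_iff)
qed

theorem lemma18:
  fixes \<alpha> :: real and r d :: nat and K :: real
    and \<sigma> :: "nat \<Rightarrow> 'a::euclidean_space \<Rightarrow> 'a"
  assumes "WR K r \<sigma> d"
  shows "\<exists>C>0. (\<forall>f \<in> Cspace \<alpha> (r + 4).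
            wnorm \<alpha> (r + 2) (Lop \<sigma> d f) + wnorm \<alpha> r (Lop \<sigma> d (Lop \<sigma> d f)) \<le> C * wnorm \<alpha> (r + 4) f)
          \<and> (\<forall>f \<in> Cspace \<alpha> (r + 2).
            Lop \<sigma> d f \<in> Cspace \<alpha> r \<and> wnorm \<alpha> r (Lop \<sigma> d f) \<le> C * wnorm \<alpha> (r + 2) f)"
proof -
  have K: "0 \<le> K" by (rule WR_K[OF assms])
  define C1 where "C1 = cL DIM('a) d K (r + 2) * real (r + 2 + 3)"
  define C2 where "C2 = cL DIM('a) d K r * real (r + 3)"
  have C1: "0 \<le> C1" unfolding C1_def using cL_nonneg[OF K] by simp
  have C2: "0 \<le> C2" unfolding C2_def using cL_nonneg[OF K] by simp
  define C where "C = 1 + C1 + C2 + C2 * C1"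
  have P2: "Lop \<sigma> d f \<in> Cspace \<alpha> r \<and> wnorm \<alpha> r (Lop \<sigma> d f) \<le> C2 * wnorm \<alpha> (r + 2) f" if f: "f \<in> Cspace \<alpha> (r + 2)" for f
    using L_main[OF assms _ f] unfolding C2_def by simp
  show ?thesis
  proof (intro exI[of _ C] conjI ballI)
    show "0 < C" unfolding C_def using C1 C2 mult_nonneg_nonneg[OF C2 C1] by linarith
  next
    fix f :: "'a \<Rightarrow> real" assume f: "f \<in> Cspace \<alpha> (r + 4)"
    have w0: "0 \<le> wnorm \<alpha> (r + 4) f" by (rule wnorm_nonneg[OF f])
    have A: "Lop \<sigma> d f \<in> Cspace \<alpha> (r + 2) \<and> wnorm \<alpha> (r + 2) (Lop \<sigma> d f) \<le> C1 * wnorm \<alpha> (r + 4) f"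
    proof -
      have e4: "r + 4 = r + 2 + 2" by simp
      show ?thesis using L_main[OF assms le_refl f[unfolded e4]] unfolding C1_def e4 .
    qed
    have B: "wnorm \<alpha> r (Lop \<sigma> d (Lop \<sigma> d f)) \<le> C2 * wnorm \<alpha> (r + 2) (Lop \<sigma> d f)"
      using P2[of "Lop \<sigma> d f"] A by blast
    also have "\<dots> \<le> C2 * (C1 * wnorm \<alpha> (r + 4) f)" using A C2 by (intro mult_left_mono) auto
    finally have "wnorm \<alpha> (r + 2) (Lop \<sigma> d f) + wnorm \<alpha> r (Lop \<sigma> d (Lop \<sigma> d f)) \<le> C1 * wnorm \<alpha> (r + 4) f + C2 * (C1 * wnorm \<alpha> (r + 4) f)"
      using A by linarith
    also have "\<dots> \<le> C * wnorm \<alpha> (r + 4) f"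
      unfolding C_def using w0 C1 C2 by (simp add: algebra_simps)
    finally show "wnorm \<alpha> (r + 2) (Lop \<sigma> d f) + wnorm \<alpha> r (Lop \<sigma> d (Lop \<sigma> d f)) \<le> C * wnorm \<alpha> (r + 4) f" .
  next
    fix f :: "'a \<Rightarrow> real" assume f: "f \<in> Cspace \<alpha> (r + 2)"
    have w0: "0 \<le> wnorm \<alpha> (r + 2) f" by (rule wnorm_nonneg[OF f])
    show "Lop \<sigma> d f \<in> Cspace \<alpha> r" using P2[OF f] by blast
    have "wnorm \<alpha> r (Lop \<sigma> d f) \<le> C2 * wnorm \<alpha> (r + 2) f" using P2[OF f] by blast
    also have "\<dots> \<le> C * wnorm \<alpha> (r + 2) f"
      unfolding C_def using w0 C1 C2 by (intro mult_right_mono) auto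
    finally show "wnorm \<alpha> r (Lop \<sigma> d f) \<le> C * wnorm \<alpha> (r + 2) f" .
  qed
qed

end
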